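(* Let $\epsilon>0$ and $\omega\ge0$ be constants, $\phi_0$ a real constant, and $\omega(t)$ a real-valued function with $|\omega(t)|\le\omega$. Let $H^A(t)=[1+\omega(t)]I_z+\epsilon\cos\phi_0 I_y+\epsilon\sin\phi_0 I_x$ and $H^B=\epsilon\cos\phi_0 I_y+\epsilon\sin\phi_0 I_x$. Consider two single-qubit pure-state evolutions $\dot\rho^A_t=-i[H^A(t),\rho^A_t]$ and $\dot\rho^B_t=-i[H^B,\rho^B_t]$, both starting from the state with Bloch vector $(x_0,y_0,z_0)=(0,0,1)$, and let $z^A_t=\mathrm{tr}(\rho^A_t\sigma_z)$, $z^B_t=\mathrm{tr}(\rho^B_t\sigma_z)$. Then $z^A_t\ge z^B_t$ for all $t\in\big[0,\frac{\pi}{2\sqrt{4+\epsilon^2}}\big]$.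
   Context: $\sigma_x,\sigma_y,\sigma_z$ are the Pauli matrices $\begin{pmatrix}0&1\\1&0\end{pmatrix},\begin{pmatrix}0&-i\\i&0\end{pmatrix},\begin{pmatrix}1&0\\0&-1\end{pmatrix}$, $I_j=\frac12\sigma_j$, $[A,B]=AB-BA$, units with $\hbar=1$. The Bloch vector of a qubit state $\rho$ is $(x,y,z)=(\mathrm{tr}(\rho\sigma_x),\mathrm{tr}(\rho\sigma_y),\mathrm{tr}(\rho\sigma_z))$, so that $\rho=\frac12(I+x\sigma_x+y\sigma_y+z\sigma_z)$. *)

theory Defs
  imports "HOL-Analysis.Analysis"
begin

type_synonym cmat2 = "complex^2^2"

definition sigma_x :: cmat2 where
  "sigma_x = (\<chi> i j. if i \<noteq> j then 1 else 0)"

definition sigma_y :: cmat2 where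
  "sigma_y = (\<chi> i j. if i = 1 \<and> j = 2 then - \<i> else if i = 2 \<and> j = 1 then \<i> else 0)"

definition sigma_z :: cmat2 where
  "sigma_z = (\<chi> i j. if i = j then (if i = 1 then 1 else -1) else 0)"

definition cscale :: "complex \<Rightarrow> cmat2 \<Rightarrow> cmat2" where
  "cscale c M = (\<chi> i j. c * M $ i $ j)"

definition I_x :: cmat2 where "I_x = cscale (1/2) sigma_x"
definition I_y :: cmat2 where "I_y = cscale (1/2) sigma_y"
definition I_z :: cmat2 where "I_z = cscale (1/2) sigma_z"

definition commutator :: "cmat2 \<Rightarrow> cmat2 \<Rightarrow> cmat2" where
  "commutator A B = A ** B - B ** A"

definition bloch_z :: "cmat2 \<Rightarrow> real" where
  "bloch_z \<rho> = Re (trace (\<rho> ** sigma_z))"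

definition rho0 :: cmat2 where
  "rho0 = cscale (1/2) (mat 1 + sigma_z)"

definition HA :: "real \<Rightarrow> real \<Rightarrow> real \<Rightarrow> cmat2" where
  "HA \<epsilon> \<phi>0 w = cscale (complex_of_real (1 + w)) I_z
      + cscale (complex_of_real (\<epsilon> * cos \<phi>0)) I_y
      + cscale (complex_of_real (\<epsilon> * sin \<phi>0)) I_x"

definition HB :: "real \<Rightarrow> real \<Rightarrow> cmat2" where
  "HB \<epsilon> \<phi>0 = cscale (complex_of_real (\<epsilon> * cos \<phi>0)) I_y
      + cscale (complex_of_real (\<epsilon> * sin \<phi>0)) I_x"

end

theory Submission
  imports Defs
begin


definition zc :: "cmat2 \<Rightarrow> real" where "zc r = Re (r$1$1 - r$2$2)"
definition uxc :: "cmat2 \<Rightarrow> real" where "uxc r = Re (r$1$2) + Re (r$2$1)"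
definition uyc :: "cmat2 \<Rightarrow> real" where "uyc r = Im (r$1$2) - Im (r$2$1)"

lemma entries:
  fixes r :: cmat2
  shows "zc (cscale (- \<i>) (commutator (HA e p w) r)) = -(e * sin p * uyc r + e * cos p * uxc r)"
    and "uxc (cscale (- \<i>) (commutator (HA e p w) r)) = (1+w) * uyc r + e * cos p * zc r"
    and "uyc (cscale (- \<i>) (commutator (HA e p w) r)) = -(1+w) * uxc r + e * sin p * zc r"
  unfolding zc_def uxc_def uyc_def
  apply (simp_all add: HA_def cscale_def commutator_def matrix_matrix_mult_def sum_2 I_x_def I_y_def I_z_def
      sigma_x_def sigma_y_def sigma_z_def algebra_simps)
  apply (simp_all add: field_simps)
  done

lemma bz: "bloch_z r = zc r"
  by (simp add: bloch_z_def zc_def trace_def matrix_matrix_mult_def sum_2 sigma_z_def)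

lemma HB_eq: "HB e p = HA e p (-1)"
  by (simp add: HA_def HB_def cscale_def vec_eq_iff)

lemma rho0_vals: "zc rho0 = 1" "uxc rho0 = 0" "uyc rho0 = 0"
  by (simp_all add: zc_def uxc_def uyc_def rho0_def cscale_def sigma_z_def mat_def)


lemma entry_deriv:
  assumes "(\<rho> has_vector_derivative D) F"
  shows "((\<lambda>t. \<rho> t $ i $ j) has_vector_derivative D $ i $ j) F"
proof -
  have "((\<lambda>t. \<rho> t $ i) has_vector_derivative D $ i) F"
    using bounded_linear.has_vector_derivative[OF bounded_linear_vec_nth assms] .
  then show ?thesis
    using bounded_linear.has_vector_derivative[OF bounded_linear_vec_nth] by blast
qed

lemma lin_derivs:
  assumes "(\<rho> has_vector_derivative D) F"
  shows "((\<lambda>t. zc (\<rho> t)) has_real_derivative zc D) F"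
    and "((\<lambda>t. uxc (\<rho> t)) has_real_derivative uxc D) F"
    and "((\<lambda>t. uyc (\<rho> t)) has_real_derivative uyc D) F"
  unfolding zc_def uxc_def uyc_def
  by (intro derivative_intros has_vector_derivative_diff entry_deriv[OF assms])+

lemma traj_derivs:
  assumes "(\<rho> has_vector_derivative cscale (- \<i>) (commutator (HA e p w) (\<rho> t))) F"
  shows "((\<lambda>t. zc (\<rho> t)) has_real_derivative -(e * sin p * uyc (\<rho> t) + e * cos p * uxc (\<rho> t))) F"
    and "((\<lambda>t. uxc (\<rho> t)) has_real_derivative (1+w) * uyc (\<rho> t) + e * cos p * zc (\<rho> t)) F"
    and "((\<lambda>t. uyc (\<rho> t)) has_real_derivative -(1+w) * uxc (\<rho> t) + e * sin p * zc (\<rho> t)) F"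
  using lin_derivs[OF assms] entries by simp_all

lemma conservation:
  fixes w :: "real \<Rightarrow> real"
  assumes r0: "\<rho> 0 = rho0"
    and d: "\<And>t. t \<ge> 0 \<Longrightarrow>
           (\<rho> has_vector_derivative cscale (- \<i>) (commutator (HA e p (w t)) (\<rho> t))) (at t within {0..})"
    and t: "t \<ge> 0"
  shows "(zc (\<rho> t))\<^sup>2 + (uxc (\<rho> t))\<^sup>2 + (uyc (\<rho> t))\<^sup>2 = 1"
proof -
  let ?N = "\<lambda>t. (zc (\<rho> t))\<^sup>2 + (uxc (\<rho> t))\<^sup>2 + (uyc (\<rho> t))\<^sup>2"
  have "\<exists>c. \<forall>x\<in>{0::real..}. ?N x = c"
  proof (rule has_field_derivative_zero_constant)
    fix x :: real assume x: "x \<in> {0..}"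
    note D = traj_derivs[OF d[of x]]
    have "(?N has_real_derivative
        2 * zc (\<rho> x) * (-(e * sin p * uyc (\<rho> x) + e * cos p * uxc (\<rho> x)))
      + 2 * uxc (\<rho> x) * ((1 + w x) * uyc (\<rho> x) + e * cos p * zc (\<rho> x))
      + 2 * uyc (\<rho> x) * (-(1 + w x) * uxc (\<rho> x) + e * sin p * zc (\<rho> x))) (at x within {0..})"
      using x D by (auto intro!: derivative_eq_intros)
    moreover have "2 * zc (\<rho> x) * (-(e * sin p * uyc (\<rho> x) + e * cos p * uxc (\<rho> x)))
      + 2 * uxc (\<rho> x) * ((1 + w x) * uyc (\<rho> x) + e * cos p * zc (\<rho> x))
      + 2 * uyc (\<rho> x) * (-(1 + w x) * uxc (\<rho> x) + e * sin p * zc (\<rho> x)) = 0"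
      by (simp add: algebra_simps)
    ultimately show "(?N has_real_derivative 0) (at x within {0..})" by simp
  qed simp
  then obtain c where c: "\<And>x. x \<ge> 0 \<Longrightarrow> ?N x = c" by auto
  have "?N 0 = 1" using r0 r0 by (simp add: rho0_vals)
  then show ?thesis using c[OF t] c[of 0] by simp
qed

lemma compare:
  fixes g :: "real \<Rightarrow> real"
  assumes cont: "continuous_on {0..T} g" and g0: "g 0 \<le> 0" and dpos: "\<delta> > 0"
    and der: "\<And>t. 0 < t \<Longrightarrow> t < T \<Longrightarrow> 0 < g t \<Longrightarrow> g t < \<delta> \<Longrightarrow> \<exists>y. DERIV g t :> y \<and> y \<le> 0"
    and t1: "t1 \<in> {0..T}"
  shows "g t1 \<le> 0"
proof (rule ccontr)
  assume "\<not> g t1 \<le> 0"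
  hence gt1: "g t1 > 0" by simp
  define A where "A = {0..t1} \<inter> g -` {..0}"
  have contA: "continuous_on {0..t1} g" using t1 by (intro continuous_on_subset[OF cont]) auto
  have clA: "closed A" unfolding A_def
    by (rule continuous_closed_preimage[OF contA]) auto
  have "0 \<in> A" using g0 t1 by (auto simp: A_def)
  moreover have bA: "bdd_above A" by (auto simp: A_def bdd_above_def)
  ultimately have t0A: "Sup A \<in> A" using clA closed_contains_Sup by blast
  define t0 where "t0 = Sup A"
  have t0: "0 \<le> t0" "t0 \<le> t1" "g t0 \<le> 0" using t0A by (auto simp: A_def t0_def)
  have pos: "g t > 0" if "t0 < t" "t \<le> t1" for t
  proof (rule ccontr)
    assume "\<not> g t > 0"
    hence "t \<in> A" using that t0 by (auto simp: A_def)
    hence "t \<le> t0" unfolding t0_def using bA by (rule cSup_upper)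
    thus False using that by simp
  qed
  define \<eta> where "\<eta> = min (g t1) \<delta> / 2"
  have eta: "0 < \<eta>" "\<eta> < \<delta>" "\<eta> < g t1" using gt1 dpos by (auto simp: \<eta>_def)
  define B where "B = {t0..t1} \<inter> g -` {\<eta>..}"
  have contB: "continuous_on {t0..t1} g" using t1 t0 by (intro continuous_on_subset[OF cont]) auto
  have clB: "closed B" unfolding B_def
    by (rule continuous_closed_preimage[OF contB]) auto
  have "t1 \<in> B" using eta t0 by (auto simp: B_def)
  hence neB: "B \<noteq> {}" by auto
  have bB: "bdd_below B" by (auto simp: B_def bdd_below_def)
  have t2B: "Inf B \<in> B" using clB closed_contains_Inf neB bB by blast
  define t2 where "t2 = Inf B"
  have t2: "t0 \<le> t2" "t2 \<le> t1" "g t2 \<ge> \<eta>" using t2B by (auto simp: B_def t2_def)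
  have small: "g t < \<eta>" if "t0 \<le> t" "t < t2" for t
  proof (rule ccontr)
    assume "\<not> g t < \<eta>"
    hence "t \<in> B" using that t2 by (auto simp: B_def)
    hence "t2 \<le> t" unfolding t2_def using bB by (rule cInf_lower)
    thus False using that by simp
  qed
  have "g t2 \<le> g t0"
  proof (rule DERIV_nonpos_imp_decreasing_open[of t0 t2 g])
    show "t0 \<le> t2" by fact
    show "continuous_on {t0..t2} g" using t1 t0 t2 by (intro continuous_on_subset[OF cont]) auto
    fix x assume x: "t0 < x" "x < t2"
    show "\<exists>y. DERIV g x :> y \<and> y \<le> 0"
      using der[of x] x t0 t2 t1 pos[of x] small[of x] eta by auto
  qed
  thus False using t0 t2 eta by linarith
qed



lemma B_exact:
  fixes e p :: real and \<rho> :: "real \<Rightarrow> cmat2"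
  assumes e: "e > 0" and r0: "\<rho> 0 = rho0"
    and d: "\<And>t. t \<ge> 0 \<Longrightarrow>
           (\<rho> has_vector_derivative cscale (- \<i>) (commutator (HA e p (-1)) (\<rho> t))) (at t within {0..})"
    and t: "t \<ge> 0"
  shows "zc (\<rho> t) = cos (e * t)"
proof -
  define M where "M = (\<lambda>t. sin p * uyc (\<rho> t) + cos p * uxc (\<rho> t))"
  let ?E = "\<lambda>t. (zc (\<rho> t) - cos (e * t))\<^sup>2 + (M t - sin (e * t))\<^sup>2"
  have "\<exists>c. \<forall>x\<in>{0::real..}. ?E x = c"
  proof (rule has_field_derivative_zero_constant)
    fix x :: real assume x: "x \<in> {0..}"
    note D = traj_derivs[OF d[of x], simplified]
    have DM: "(M has_real_derivative e * zc (\<rho> x)) (at x within {0..})"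
    proof -
      have "(M has_real_derivative sin p * (e * sin p * zc (\<rho> x)) + cos p * (e * cos p * zc (\<rho> x))) (at x within {0..})"
        unfolding M_def using x D by (auto intro!: derivative_eq_intros simp: algebra_simps)
      moreover have "sin p * (e * sin p * zc (\<rho> x)) + cos p * (e * cos p * zc (\<rho> x)) = e * zc (\<rho> x)"
      proof -
        have "sin p * (e * sin p * zc (\<rho> x)) + cos p * (e * cos p * zc (\<rho> x)) = e * zc (\<rho> x) * ((sin p)\<^sup>2 + (cos p)\<^sup>2)"
          by (simp only: power2_eq_square) algebra
        thus ?thesis by simp
      qed
      ultimately show ?thesis by simp
    qed
    have Dz: "((\<lambda>t. zc (\<rho> t)) has_real_derivative - (e * M x)) (at x within {0..})"
    proof -
      have "- (e * M x) = -(e * sin p * uyc (\<rho> x) + e * cos p * uxc (\<rho> x))"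
        by (simp add: M_def algebra_simps)
      thus ?thesis using traj_derivs(1)[OF d[of x]] x by simp
    qed
    have "(?E has_real_derivative
        2 * (zc (\<rho> x) - cos (e * x)) * (- (e * M x) + sin (e * x) * e)
      + 2 * (M x - sin (e * x)) * (e * zc (\<rho> x) - cos (e * x) * e)) (at x within {0..})"
      using x DM Dz by (auto intro!: derivative_eq_intros simp: algebra_simps)
    moreover have "2 * (zc (\<rho> x) - cos (e * x)) * (- (e * M x) + sin (e * x) * e)
      + 2 * (M x - sin (e * x)) * (e * zc (\<rho> x) - cos (e * x) * e) = 0"
      by (simp add: algebra_simps)
    ultimately show "(?E has_real_derivative 0) (at x within {0..})" by simp
  qed simp
  then obtain c where c: "\<And>x. x \<ge> 0 \<Longrightarrow> ?E x = c" by auto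
  have "?E 0 = 0" using r0 by (simp add: rho0_vals M_def)
  hence "?E t = 0" using c[OF t] c[of 0] by simp
  hence "(zc (\<rho> t) - cos (e * t))\<^sup>2 = 0"
    by (metis add_nonneg_eq_0_iff zero_le_power2)
  thus ?thesis by simp
qed

lemma cs_id: "(e * sa * y + e * ca * x)\<^sup>2 + (e * sa * x - e * ca * y)\<^sup>2
   = e\<^sup>2 * (sa\<^sup>2 + ca\<^sup>2) * (x\<^sup>2 + y\<^sup>2)" for e sa ca x y :: real
  by (simp add: power2_eq_square algebra_simps)

lemma A_bound:
  fixes e p T :: real and w :: "real \<Rightarrow> real" and \<rho> :: "real \<Rightarrow> cmat2"
  assumes e: "e > 0" and r0: "\<rho> 0 = rho0" and eT: "e * T < pi / 2"
    and d: "\<And>t. t \<ge> 0 \<Longrightarrow>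
           (\<rho> has_vector_derivative cscale (- \<i>) (commutator (HA e p (w t)) (\<rho> t))) (at t within {0..})"
    and t: "t \<in> {0..T}"
  shows "zc (\<rho> t) \<ge> cos (e * t)"
proof -
  let ?z = "\<lambda>t. zc (\<rho> t)"
  have cons: "\<And>t. t \<ge> 0 \<Longrightarrow> (?z t)\<^sup>2 + (uxc (\<rho> t))\<^sup>2 + (uyc (\<rho> t))\<^sup>2 = 1"
    using conservation[of \<rho> e p w, OF r0 d] by blast
  have zb: "-1 \<le> ?z t \<and> ?z t \<le> 1" if "t \<ge> 0" for t
  proof -
    have "0 \<le> (uxc (\<rho> t))\<^sup>2" "0 \<le> (uyc (\<rho> t))\<^sup>2" by simp_all
    hence "(?z t)\<^sup>2 \<le> 1" using cons[OF that] by linarith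
    thus ?thesis using abs_square_le_1[of "?z t"] by (simp add: abs_le_iff)
  qed
  define g where "g = (\<lambda>t. arccos (?z t) - e * t)"
  have contz: "continuous_on {0..} ?z"
    by (rule DERIV_continuous_on[OF traj_derivs(1)[OF d]]) auto
  have cont: "continuous_on {0..T} g" unfolding g_def
    by (intro continuous_intros continuous_on_subset[OF contz]) (use zb in auto)
  have g0: "g 0 \<le> 0" using r0 by (simp add: g_def rho0_vals)
  have gt: "g t \<le> 0"
  proof (rule compare[OF cont g0, of "pi/2 - e * T"])
    show "0 < pi / 2 - e * T" using eT by simp
    show "t \<in> {0..T}" by fact
    fix s assume s: "0 < s" "s < T" "0 < g s" "g s < pi / 2 - e * T"
    let ?a = "arccos (?z s)"
    have zs: "-1 \<le> ?z s" "?z s \<le> 1" using zb[of s] s by auto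
    have "0 \<le> e * s" using s e by simp
    hence a1: "0 < ?a" using s by (simp add: g_def)
    have "e * s \<le> e * T" using s e by (intro mult_left_mono) auto
    hence a2: "?a < pi/2" using s by (simp add: g_def)
    have zeq: "?z s = cos ?a" using zs by simp
    have zpos: "0 < ?z s" 
    proof -
      have "0 < cos ?a" using a1 a2 by (intro cos_gt_zero) auto
      thus ?thesis using zeq by simp
    qed
    have zlt: "?z s < 1"
    proof -
      have "cos ?a < cos 0" using a1 a2 by (intro cos_monotone_0_pi) auto
      thus ?thesis using zeq by simp
    qed
    let ?zd = "-(e * sin p * uyc (\<rho> s) + e * cos p * uxc (\<rho> s))"
    have dzw: "(?z has_real_derivative ?zd) (at s within {0<..})"
      using s by (intro DERIV_subset[OF traj_derivs(1)[OF d[of s]]]) auto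
    have dz: "(?z has_real_derivative ?zd) (at s)"
      using dzw s by (simp add: at_within_open[of s "{0<..}"])
    have dg: "(g has_real_derivative inverse (- sqrt (1 - (?z s)\<^sup>2)) * ?zd - e) (at s)"
    proof -
      have A: "((\<lambda>t. arccos (?z t)) has_real_derivative inverse (- sqrt (1 - (?z s)\<^sup>2)) * ?zd) (at s)"
        by (rule DERIV_chain2[OF DERIV_arccos dz]) (use zpos zlt in auto)
      have B: "((\<lambda>t. e * t) has_real_derivative e) (at s)"
        by (auto intro!: derivative_eq_intros)
      show ?thesis unfolding g_def using DERIV_diff[OF A B] .
    qed
    define X where "X = e * sin p * uyc (\<rho> s) + e * cos p * uxc (\<rho> s)"
    define q where "q = sqrt (1 - (?z s)\<^sup>2)"
    have qpos: "q > 0" unfolding q_def using zpos zlt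
      by (simp add: power2_less_1_iff abs_less_iff)
    have X2: "X\<^sup>2 \<le> (e * q)\<^sup>2"
    proof -
      have "X\<^sup>2 + (e * sin p * uxc (\<rho> s) - e * cos p * uyc (\<rho> s))\<^sup>2
          = e\<^sup>2 * ((sin p)\<^sup>2 + (cos p)\<^sup>2) * ((uxc (\<rho> s))\<^sup>2 + (uyc (\<rho> s))\<^sup>2)"
        unfolding X_def by (rule cs_id)
      also have "\<dots> = e\<^sup>2 * (1 - (?z s)\<^sup>2)" using cons[of s] s by simp
      also have "\<dots> = (e * q)\<^sup>2"
      proof -
        have "(?z s)\<^sup>2 < 1" using zpos zlt by (simp add: power2_less_1_iff abs_less_iff)
        thus ?thesis unfolding q_def by (simp add: power_mult_distrib)
      qed
      finally have "X\<^sup>2 + (e * sin p * uxc (\<rho> s) - e * cos p * uyc (\<rho> s))\<^sup>2 = (e * q)\<^sup>2" .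
      moreover have "0 \<le> (e * sin p * uxc (\<rho> s) - e * cos p * uyc (\<rho> s))\<^sup>2" by simp
      ultimately show ?thesis by linarith
    qed
    have Xle: "X \<le> e * q"
      by (rule power2_le_imp_le[OF X2]) (use qpos e in simp)
    have "inverse (- sqrt (1 - (?z s)\<^sup>2)) * ?zd - e = X / q - e"
      unfolding X_def[symmetric] q_def[symmetric] by (simp add: divide_inverse)
    also have "\<dots> \<le> 0" using Xle qpos by (simp add: divide_le_eq mult.commute)
    finally show "\<exists>y. (g has_real_derivative y) (at s) \<and> y \<le> 0" using dg by blast
  qed
  have t0: "0 \<le> t" "t \<le> T" using t by auto
  have "arccos (?z t) \<le> e * t" using gt by (simp add: g_def)
  moreover have "e * t \<le> pi"
  proof -
    have "e * t \<le> e * T" using t0 e by (intro mult_left_mono) auto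
    thus ?thesis using eT pi_gt_zero by linarith
  qed
  moreover have "0 \<le> arccos (?z t)" using zb[of t] t0 by (simp add: arccos_lbound)
  ultimately have "cos (e * t) \<le> cos (arccos (?z t))"
    by (intro cos_monotone_0_pi_le) auto
  thus ?thesis using zb[of t] t0 by simp
qed


theorem lemma2:
  fixes \<epsilon> \<omega> \<phi>0 :: real
    and \<omega>t :: "real \<Rightarrow> real"
    and \<rho>A \<rho>B :: "real \<Rightarrow> complex^2^2"
  assumes "\<epsilon> > 0" and "\<omega> \<ge> 0"
    and "\<And>t. \<bar>\<omega>t t\<bar> \<le> \<omega>"
    and "\<rho>A 0 = rho0" and "\<rho>B 0 = rho0"
    and "\<And>t. t \<ge> 0 \<Longrightarrow>
           (\<rho>A has_vector_derivative cscale (- \<i>) (commutator (HA \<epsilon> \<phi>0 (\<omega>t t)) (\<rho>A t)))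
             (at t within {0..})"
    and "\<And>t. t \<ge> 0 \<Longrightarrow>
           (\<rho>B has_vector_derivative cscale (- \<i>) (commutator (HB \<epsilon> \<phi>0) (\<rho>B t)))
             (at t within {0..})"
  shows "\<forall>t \<in> {0 .. pi / (2 * sqrt (4 + \<epsilon>\<^sup>2))}. bloch_z (\<rho>A t) \<ge> bloch_z (\<rho>B t)"
proof
  define T where "T = pi / (2 * sqrt (4 + \<epsilon>\<^sup>2))"
  fix t assume t: "t \<in> {0 .. pi / (2 * sqrt (4 + \<epsilon>\<^sup>2))}"
  hence t': "t \<in> {0..T}" by (simp add: T_def)
  have sq: "\<epsilon> < sqrt (4 + \<epsilon>\<^sup>2)" by (rule real_less_rsqrt) simp
  have sp: "0 < sqrt (4 + \<epsilon>\<^sup>2)" using sq assms(1) by linarith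
  have eT: "\<epsilon> * T < pi / 2"
  proof -
    have "\<epsilon> * T = pi / 2 * (\<epsilon> / sqrt (4 + \<epsilon>\<^sup>2))" by (simp add: T_def)
    also have "\<dots> < pi / 2 * 1"
      using sq sp by (intro mult_strict_left_mono) (simp_all add: divide_less_eq)
    finally show ?thesis by simp
  qed
  have A: "zc (\<rho>A t) \<ge> cos (\<epsilon> * t)"
    by (rule A_bound[of \<epsilon> \<rho>A T \<phi>0 \<omega>t, OF assms(1) assms(4) eT assms(6) t'])
  have dB: "\<And>t. t \<ge> 0 \<Longrightarrow>
           (\<rho>B has_vector_derivative cscale (- \<i>) (commutator (HA \<epsilon> \<phi>0 (-1)) (\<rho>B t))) (at t within {0..})"
    using assms(7) by (simp add: HB_eq)
  have B: "zc (\<rho>B t) = cos (\<epsilon> * t)"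
    using B_exact[of \<epsilon> \<rho>B \<phi>0, OF assms(1) assms(5) dB] t by simp
  show "bloch_z (\<rho>A t) \<ge> bloch_z (\<rho>B t)" using A B by (simp add: bz)
qed

end
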